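(* Let $n \geq 2$ and $r$ be positive integers. Let $P(X)$ be a complex polynomial of degree $n$ and $U(X)$ a quadratic polynomial with non-zero discriminant such that \[ U(X)P''(X) - (n-1)U'(X)P'(X) + \frac{n(n-1)}{2}U''(X)P(X) = 0. \] Set $Y_{1}(X) = 2U(X)P'(X) - nU'(X)P(X)$, $h = \frac{n^{2}-1}{4}\left(U'(X)^{2} - 2U(X)U''(X)\right)$ (a constant) and $\lambda = h/(n^{2}-1)$. Define polynomials $A_{r}(X), B_{r}(X)$ by \[ A_{0} = \tfrac{2h}{3},\quad A_{1} = \tfrac{2(n+1)}{3}\left(UP' - \tfrac{n-1}{2}U'P\right),\quad B_{0} = \tfrac{2hX}{3},\quad B_{1} = XA_{1} - \tfrac{2(n+1)UP}{3}, \] and for $r \geq 1$ \[ \lambda(n(r+1)-1)A_{r+1} = \left(r+\tfrac12\right)Y_{1}A_{r} - (nr+1)P^{2}A_{r-1}, \] \[ \lambda(n(r+1)-1)B_{r+1} = \left(r+\tfrac12\right)Y_{1}B_{r} - (nr+1)P^{2}B_{r-1}. \] Let $\beta$ be a root of $P(X)$ and $C_{r}(X) = \beta A_{r}(X) - B_{r}(X)$. Fix a square root $\sqrt{\lambda}$ and put \[ z(X) = \tfrac12\left(\tfrac{Y_{1}(X)}{2n\sqrt{\lambda}} + P(X)\right),\quad u(X) = \tfrac12\left(\tfrac{Y_{1}(X)}{2n\sqrt{\lambda}} - P(X)\right),\quad w(X) = \tfrac{z(X)}{u(X)}, \] \[ a(X) = \tfrac{(n-1)\sqrt{\lambda}}{2P(X)}A_{1}(X)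 - \left(\tfrac{Y_{1}(X)}{4\sqrt{\lambda}P(X)} - \tfrac12\right)A_{0}(X),\quad b(X) = \tfrac{(n-1)\sqrt{\lambda}}{2P(X)}A_{1}(X) - \left(\tfrac{Y_{1}(X)}{4\sqrt{\lambda}P(X)} + \tfrac12\right)A_{0}(X), \] \[ c(X) = \tfrac{(n-1)\sqrt{\lambda}}{2P(X)}B_{1}(X) - \left(\tfrac{Y_{1}(X)}{4\sqrt{\lambda}P(X)} - \tfrac12\right)B_{0}(X),\quad d(X) = \tfrac{(n-1)\sqrt{\lambda}}{2P(X)}B_{1}(X) - \left(\tfrac{Y_{1}(X)}{4\sqrt{\lambda}P(X)} + \tfrac12\right)B_{0}(X). \] Let \[ R_{n,r}(x) = \frac{\Gamma(r+1+1/n)}{r!\,\Gamma(1/n)} \int_{1}^{x} (1-t)^{r}(t-x)^{r} t^{-(r+1-1/n)}\, dt, \] the integration path being the straight line from $1$ to $x$. If $x$ is a non-zero complex number such that $w(x)$ is not a negative number or zero, then \[ (\sqrt{\lambda})^{r}C_{r}(x) = \left(\beta\left(a(x)w(x)^{1/n} - b(x)\right) - \left(c(x)w(x)^{1/n} - d(x)\right)\right)X_{n,r}^{*}(u(x),z(x)) - \left(\beta a(x) - c(x)\right)u(x)^{r}R_{n,r}(w(x)). \]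
   Context: For positive integers $n \geq 2$ and $r$, $X_{n,r}(X) = {}_{2}F_{1}(-r,-r-1/n;1-1/n;X)$, where ${}_{2}F_{1}(a,b;c;X) = \sum_{s\geq0}\frac{(a)_{s}(b)_{s}}{(c)_{s}\,s!}X^{s}$ with $(y)_{s} = y(y+1)\cdots(y+s-1)$ (a polynomial of degree at most $r$ here), and $X_{n,r}^{*}(X,Y) = Y^{r}X_{n,r}(X/Y)$ is the associated homogeneous form. Non-integral complex powers ($w^{1/n}$, $t^{1/n-r-1}$) are taken with the principal branch. *)

theory Defs
  imports "HOL-Complex_Analysis.Complex_Analysis" "HOL-Computational_Algebra.Polynomial"
begin

definition quad_disc :: "complex poly \<Rightarrow> complex" where
  "quad_disc U = (coeff U 1)^2 - 4 * coeff U 2 * coeff U 0"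

definition Y1_poly :: "nat \<Rightarrow> complex poly \<Rightarrow> complex poly \<Rightarrow> complex poly" where
  "Y1_poly n U P = smult 2 (U * pderiv P) - smult (of_nat n) (pderiv U * P)"

definition h_poly :: "nat \<Rightarrow> complex poly \<Rightarrow> complex poly" where
  "h_poly n U = smult ((of_nat n ^ 2 - 1) / 4) ((pderiv U)^2 - smult 2 (U * pderiv (pderiv U)))"

definition lam :: "nat \<Rightarrow> complex poly \<Rightarrow> complex" where
  "lam n U = coeff (h_poly n U) 0 / (of_nat n ^ 2 - 1)"

definition A0_poly :: "nat \<Rightarrow> complex poly \<Rightarrow> complex poly" where
  "A0_poly n U = smult (2/3) (h_poly n U)"

definition A1_poly :: "nat \<Rightarrow> complex poly \<Rightarrow> complex poly \<Rightarrow> complex poly" where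
  "A1_poly n U P = smult (2 * (of_nat n + 1) / 3)
      (U * pderiv P - smult ((of_nat n - 1) / 2) (pderiv U * P))"

definition B0_poly :: "nat \<Rightarrow> complex poly \<Rightarrow> complex poly" where
  "B0_poly n U = smult (2/3) (h_poly n U * [:0, 1:])"

definition B1_poly :: "nat \<Rightarrow> complex poly \<Rightarrow> complex poly \<Rightarrow> complex poly" where
  "B1_poly n U P = [:0, 1:] * A1_poly n U P - smult (2 * (of_nat n + 1) / 3) (U * P)"

text \<open>The three-term recurrence
  lam (n(r+1)-1) F_{r+1} = (r+1/2) Y1 F_r - (nr+1) P^2 F_{r-1}   (r >= 1),
  solved for F_{r+1} (written with r+1 in place of r).\<close>
fun rec_seq :: "complex \<Rightarrow> nat \<Rightarrow> complex poly \<Rightarrow> complex poly \<Rightarrow> complex poly \<Rightarrow> complex poly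
                 \<Rightarrow> nat \<Rightarrow> complex poly" where
  "rec_seq l n Y P F0 F1 0 = F0"
| "rec_seq l n Y P F0 F1 (Suc 0) = F1"
| "rec_seq l n Y P F0 F1 (Suc (Suc r)) =
     smult (1 / (l * (of_nat n * (of_nat (Suc r) + 1) - 1)))
       (smult (of_nat (Suc r) + 1/2) (Y * rec_seq l n Y P F0 F1 (Suc r))
        - smult (of_nat n * of_nat (Suc r) + 1) (P^2 * rec_seq l n Y P F0 F1 r))"

definition A_seq :: "nat \<Rightarrow> complex poly \<Rightarrow> complex poly \<Rightarrow> nat \<Rightarrow> complex poly" where
  "A_seq n U P = rec_seq (lam n U) n (Y1_poly n U P) P (A0_poly n U) (A1_poly n U P)"

definition B_seq :: "nat \<Rightarrow> complex poly \<Rightarrow> complex poly \<Rightarrow> nat \<Rightarrow> complex poly" where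
  "B_seq n U P = rec_seq (lam n U) n (Y1_poly n U P) P (B0_poly n U) (B1_poly n U P)"

text \<open>The polynomial
  (n-1) s/(2P) F1 - (Y1/(4 s P) - e) F0  =  ((n-1)s/2 F1 - Y1 F0/(4s)) / P + e F0,
  the division by P being exact (polynomial quotient).  With e = 1/2 this is a (resp. c),
  with e = -1/2 it is b (resp. d).\<close>
definition coef_poly :: "nat \<Rightarrow> complex \<Rightarrow> complex poly \<Rightarrow> complex poly \<Rightarrow> complex poly
                          \<Rightarrow> complex poly \<Rightarrow> complex \<Rightarrow> complex poly" where
  "coef_poly n s P Y F1 F0 e =
     (smult ((of_nat n - 1) * s / 2) F1 - smult (1 / (4 * s)) (Y * F0)) div P + smult e F0"

text \<open>X_{n,r}(X) = 2F1(-r, -r-1/n; 1-1/n; X) (terms with index > r vanish).\<close>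
definition Xnr_coeff :: "nat \<Rightarrow> nat \<Rightarrow> nat \<Rightarrow> complex" where
  "Xnr_coeff n r k = pochhammer (- of_nat r) k * pochhammer (- of_nat r - 1 / of_nat n) k
                      / (pochhammer (1 - 1 / of_nat n) k * fact k)"

definition Xnr :: "nat \<Rightarrow> nat \<Rightarrow> complex \<Rightarrow> complex" where
  "Xnr n r X = (\<Sum>k\<le>r. Xnr_coeff n r k * X ^ k)"

text \<open>Homogeneous form X*_{n,r}(X,Y) = Y^r X_{n,r}(X/Y), written out as a polynomial.\<close>
definition Xnr_star :: "nat \<Rightarrow> nat \<Rightarrow> complex \<Rightarrow> complex \<Rightarrow> complex" where
  "Xnr_star n r X Y = (\<Sum>k\<le>r. Xnr_coeff n r k * X ^ k * Y ^ (r - k))"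

definition Rnr :: "nat \<Rightarrow> nat \<Rightarrow> complex \<Rightarrow> complex" where
  "Rnr n r x = Gamma (of_nat r + 1 + 1 / of_nat n) / (fact r * Gamma (1 / of_nat n))
     * contour_integral (linepath 1 x)
         (\<lambda>t. (1 - t) ^ r * (t - x) ^ r * t powr (- (of_nat r + 1 - 1 / of_nat n)))"

definition z_val :: "nat \<Rightarrow> complex poly \<Rightarrow> complex poly \<Rightarrow> complex \<Rightarrow> complex \<Rightarrow> complex" where
  "z_val n U P s x = (poly (Y1_poly n U P) x / (2 * of_nat n * s) + poly P x) / 2"

definition u_val :: "nat \<Rightarrow> complex poly \<Rightarrow> complex poly \<Rightarrow> complex \<Rightarrow> complex \<Rightarrow> complex" where
  "u_val n U P s x = (poly (Y1_poly n U P) x / (2 * of_nat n * s) - poly P x) / 2"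

end

theory Submission
  imports Defs
begin

definition cf :: "complex \<Rightarrow> nat \<Rightarrow> nat \<Rightarrow> complex" where
  "cf a r k = pochhammer (- of_nat r) k * pochhammer (- of_nat r - a) k / (pochhammer (1 - a) k * fact k)"

lemma Xnr_coeff_cf: "Xnr_coeff n r k = cf (1 / of_nat n) r k"
  by (simp add: Xnr_coeff_def cf_def)

lemma poch_SS: "pochhammer (x::complex) (Suc (Suc j)) = x * (x+1) * pochhammer (x+2) j"
  by (simp add: pochhammer_rec algebra_simps)

lemma poch_S: "pochhammer (x::complex) (Suc j) = x * pochhammer (x+1) j"
  by (simp add: pochhammer_rec)

lemma poch_S': "pochhammer (x::complex) (Suc j) = pochhammer x j * (x + of_nat j)"
  by (simp add: pochhammer_rec')

lemma poch_SS': "pochhammer (x::complex) (Suc (Suc j)) = pochhammer x j * (x + of_nat j) * (x + of_nat j + 1)"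
  by (simp add: pochhammer_rec' algebra_simps)

lemma cf_beyond: "r < k \<Longrightarrow> cf a r k = 0"
  by (simp add: cf_def pochhammer_of_nat_eq_0_iff)

lemma cf_0 [simp]: "cf a r 0 = 1"
  by (simp add: cf_def)

lemma gen:
  fixes X Y Z F a m j :: complex
  assumes Z: "Z \<noteq> 0" and F: "F \<noteq> 0" and j1: "1 - a + j \<noteq> 0" and j2: "2 - a + j \<noteq> 0"
    and f1: "j + 1 \<noteq> 0" and f2: "j + 2 \<noteq> 0"
  defines "D1 \<equiv> Z * (1 - a + j) * (F * (j + 1))"
    and "D2 \<equiv> Z * (1 - a + j) * (2 - a + j) * (F * (j + 1) * (j + 2))"
  shows "(m + 2 - a) * ((m + 2) * (m + 1) * X * ((m + 2 + a) * (m + 1 + a) * Y) / D2)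
   = (2 * m + 3) * ((- m - 1) * (X * (- m + j)) * ((- m - 1 - a) * (Y * (- m - a + j))) / D2
         + (- m - 1) * X * ((- m - 1 - a) * Y) / D1)
     - (m + 1 + a) * (X * (- m + j) * (- m + j + 1) * (Y * (- m - a + j) * (- m - a + j + 1)) / D2
         - 2 * (X * (- m + j) * (Y * (- m - a + j)) / D1) + X * Y / (Z * F))"
proof -
  have D2: "D2 = D1 * ((2 - a + j) * (j + 2))" by (simp add: D1_def D2_def mult_ac)
  have D1: "D1 = Z * F * ((1 - a + j) * (j + 1))" by (simp add: D1_def mult_ac)
  have nz1: "D1 \<noteq> 0" using Z F j1 f1 by (simp add: D1_def)
  have nz2: "(2 - a + j) * (j + 2) \<noteq> 0" using j2 f2 by simp
  have nz3: "(1 - a + j) * (j + 1) \<noteq> 0" using j1 f1 by simp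
  define q where "q = 1 / D2"
  have r2: "\<And>N. N / D2 = N * q" by (simp add: q_def)
  have r1: "\<And>N. N / D1 = N * ((2 - a + j) * (j + 2)) * q"
    using mult_divide_mult_cancel_right[OF nz2] by (simp add: q_def D2)
  have r0: "\<And>N. N / (Z * F) = N * ((1 - a + j) * (j + 1)) * ((2 - a + j) * (j + 2)) * q"
  proof -
    fix N
    have e: "D2 = (Z * F) * (((1 - a + j) * (j + 1)) * ((2 - a + j) * (j + 2)))"
      by (simp add: D2 D1 mult_ac)
    have "((1 - a + j) * (j + 1)) * ((2 - a + j) * (j + 2)) \<noteq> 0" using nz2 nz3 by simp
    from mult_divide_mult_cancel_right[OF this, of N "Z * F"]
    show "N / (Z * F) = N * ((1 - a + j) * (j + 1)) * ((2 - a + j) * (j + 2)) * q"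
      by (simp add: q_def e mult_ac)
  qed
  show ?thesis unfolding r0 r1 r2 by algebra
qed

lemma gen1:
  fixes a m :: complex
  assumes "1 - a \<noteq> 0"
  shows "(m + 2 - a) * ((- (m + 2)) * (- (m + 2) - a) / (1 - a))
   = (2 * m + 3) * ((- (m + 1)) * (- (m + 1) - a) / (1 - a) + 1)
     - (m + 1 + a) * ((- m) * (- m - a) / (1 - a) - 2 * 1)"
proof -
  define q where "q = 1 / (1 - a)"
  have e: "\<And>N. N / (1 - a) = N * q" by (simp add: q_def)
  have hq: "q * (1 - a) = 1" using assms by (simp add: q_def)
  show ?thesis unfolding e using hq by algebra
qed

locale alph =
  fixes a :: complex
  assumes a_ok: "\<And>i::nat. 1 - a + of_nat i \<noteq> 0"
begin

lemma Z_nz: "pochhammer (1 - a) k \<noteq> 0"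
  using a_ok by (auto simp: pochhammer_eq_0_iff eq_neg_iff_add_eq_0)

lemma cf_rec_SS:
  "(of_nat m + 2 - a) * cf a (Suc (Suc m)) (Suc (Suc j))
   = (2 * of_nat m + 3) * (cf a (Suc m) (Suc (Suc j)) + cf a (Suc m) (Suc j))
     - (of_nat m + 1 + a) * (cf a m (Suc (Suc j)) - 2 * cf a m (Suc j) + cf a m j)"
proof -
  define X where "X = (pochhammer (- of_nat m) j :: complex)"
  define Y where "Y = pochhammer (- of_nat m - a) j"
  define Z where "Z = pochhammer (1 - a) j"
  define F where "F = (fact j :: complex)"
  have Z: "Z \<noteq> 0" unfolding Z_def by (rule Z_nz)
  have F: "F \<noteq> 0" unfolding F_def by simp
  have j1: "1 - a + of_nat j \<noteq> 0" by (rule a_ok)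
  have j2: "2 - a + of_nat j \<noteq> 0" using a_ok[of "Suc j"] by (simp add: algebra_simps)
  have f1: "(of_nat j + 1::complex) \<noteq> 0" by (metis of_nat_Suc of_nat_eq_0_iff nat.distinct(1) add.commute)
  have f2: "(of_nat j + 2::complex) \<noteq> 0" using of_nat_eq_0_iff[of "j+2", where 'a=complex] by (simp add: add.commute)
  have fS: "(fact (Suc j) :: complex) = F * (of_nat j + 1)" by (simp add: F_def algebra_simps)
  have fSS: "(fact (Suc (Suc j)) :: complex) = F * (of_nat j + 1) * (of_nat j + 2)"
    by (simp add: F_def algebra_simps)
  have ZS: "pochhammer (1 - a) (Suc j) = Z * (1 - a + of_nat j)" by (simp add: Z_def poch_S')
  have ZSS: "pochhammer (1 - a) (Suc (Suc j)) = Z * (1 - a + of_nat j) * (2 - a + of_nat j)"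
    by (simp add: Z_def poch_SS' algebra_simps)
  have cm0: "cf a m j = X * Y / (Z * F)" by (simp add: cf_def X_def Y_def Z_def F_def)
  have cm1: "cf a m (Suc j) = X * (- of_nat m + of_nat j) * (Y * (- of_nat m - a + of_nat j))
      / (Z * (1 - a + of_nat j) * (F * (of_nat j + 1)))"
    unfolding cf_def ZS fS unfolding poch_S' X_def[symmetric] Y_def[symmetric] Z_def[symmetric] by (simp add: mult_ac)
  have cm2: "cf a m (Suc (Suc j)) = X * (- of_nat m + of_nat j) * (- of_nat m + of_nat j + 1)
      * (Y * (- of_nat m - a + of_nat j) * (- of_nat m - a + of_nat j + 1))
      / (Z * (1 - a + of_nat j) * (2 - a + of_nat j) * (F * (of_nat j + 1) * (of_nat j + 2)))"
    unfolding cf_def ZSS fSS unfolding poch_SS' X_def[symmetric] Y_def[symmetric] Z_def[symmetric] by (simp add: mult_ac)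
  have e1: "- of_nat (Suc m) + 1 = (- of_nat m :: complex)" by simp
  have e2: "- of_nat (Suc m) - a + 1 = (- of_nat m - a :: complex)" by simp
  have c11: "cf a (Suc m) (Suc j) = (- of_nat m - 1) * X * ((- of_nat m - 1 - a) * Y)
      / (Z * (1 - a + of_nat j) * (F * (of_nat j + 1)))"
    unfolding cf_def ZS fS unfolding poch_S e1 e2 X_def[symmetric] Y_def[symmetric] Z_def[symmetric] by (simp add: algebra_simps)
  have c12: "cf a (Suc m) (Suc (Suc j)) = (- of_nat m - 1) * (X * (- of_nat m + of_nat j))
      * ((- of_nat m - 1 - a) * (Y * (- of_nat m - a + of_nat j)))
      / (Z * (1 - a + of_nat j) * (2 - a + of_nat j) * (F * (of_nat j + 1) * (of_nat j + 2)))"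
    unfolding cf_def ZSS fSS unfolding poch_S[of _ "Suc j"] e1 e2 unfolding poch_S'[of _ j] X_def[symmetric] Y_def[symmetric] Z_def[symmetric] by (simp add: algebra_simps)
  have e3: "- of_nat (Suc (Suc m)) + 2 = (- of_nat m :: complex)" by simp
  have e4: "- of_nat (Suc (Suc m)) - a + 2 = (- of_nat m - a :: complex)" by simp
  have c22: "cf a (Suc (Suc m)) (Suc (Suc j)) = (of_nat m + 2) * (of_nat m + 1) * X
      * ((of_nat m + 2 + a) * (of_nat m + 1 + a) * Y)
      / (Z * (1 - a + of_nat j) * (2 - a + of_nat j) * (F * (of_nat j + 1) * (of_nat j + 2)))"
    unfolding cf_def ZSS fSS unfolding poch_SS e3 e4 X_def[symmetric] Y_def[symmetric] Z_def[symmetric] by (simp add: algebra_simps)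
  show ?thesis
    unfolding cm0 cm1 cm2 c11 c12 c22
    by (rule gen[OF Z F j1 j2 f1 f2])
qed


lemma cf_1: "cf a r 1 = (- of_nat r) * (- of_nat r - a) / (1 - a)"
  by (simp add: cf_def)

lemma cf_rec_1:
  "(of_nat m + 2 - a) * cf a (Suc (Suc m)) 1
   = (2 * of_nat m + 3) * (cf a (Suc m) 1 + cf a (Suc m) 0)
     - (of_nat m + 1 + a) * (cf a m 1 - 2 * cf a m 0)"
proof -
  have "1 - a \<noteq> 0" using a_ok[of 0] by simp
  define q where "q = 1 / (1 - a)"
  have e: "\<And>N. N / (1 - a) = N * q" by (simp add: q_def)
  have hq: "q * (1 - a) = 1" using \<open>1 - a \<noteq> 0\<close> by (simp add: q_def)
  show ?thesis unfolding cf_1 cf_0 of_nat_Suc e using hq by algebra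
qed

definition Xp :: "nat \<Rightarrow> complex poly" where
  "Xp r = (\<Sum>k\<le>r. monom (cf a r k) k)"

lemma coeff_Xp: "coeff (Xp r) i = cf a r i"
  unfolding Xp_def by (auto simp: coeff_sum coeff_monom cf_beyond)

lemma poly_Xp: "poly (Xp r) t = (\<Sum>k\<le>r. cf a r k * t ^ k)"
  unfolding Xp_def by (simp add: poly_sum poly_monom)

lemma Xp_rec:
  "smult (of_nat m + 2 - a) (Xp (Suc (Suc m)))
   = smult (2 * of_nat m + 3) (Xp (Suc m) + pCons 0 (Xp (Suc m)))
     - smult (of_nat m + 1 + a) (Xp m - smult 2 (pCons 0 (Xp m)) + pCons 0 (pCons 0 (Xp m)))"
proof (rule poly_eqI)
  fix i show "coeff (smult (of_nat m + 2 - a) (Xp (Suc (Suc m)))) i =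
    coeff (smult (2 * of_nat m + 3) (Xp (Suc m) + pCons 0 (Xp (Suc m)))
     - smult (of_nat m + 1 + a) (Xp m - smult 2 (pCons 0 (Xp m)) + pCons 0 (pCons 0 (Xp m)))) i"
  proof (cases i)
    case 0 then show ?thesis by (simp add: coeff_Xp algebra_simps)
  next
    case (Suc i')
    show ?thesis
    proof (cases i')
      case 0 then show ?thesis using Suc cf_rec_1[of m] by (simp add: coeff_Xp)
    next
      case (Suc j) then show ?thesis using \<open>i = Suc i'\<close> cf_rec_SS[of m j] by (simp add: coeff_Xp)
    qed
  qed
qed

lemma Xsum_rec:
  "(of_nat m + 2 - a) * (\<Sum>k\<le>Suc (Suc m). cf a (Suc (Suc m)) k * t ^ k)
   = (2 * of_nat m + 3) * (1 + t) * (\<Sum>k\<le>Suc m. cf a (Suc m) k * t ^ k)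
     - (of_nat m + 1 + a) * (1 - t)^2 * (\<Sum>k\<le>m. cf a m k * t ^ k)"
proof -
  have "poly (smult (of_nat m + 2 - a) (Xp (Suc (Suc m)))) t = poly (smult (2 * of_nat m + 3) (Xp (Suc m) + pCons 0 (Xp (Suc m)))
     - smult (of_nat m + 1 + a) (Xp m - smult 2 (pCons 0 (Xp m)) + pCons 0 (pCons 0 (Xp m)))) t"
    by (simp only: Xp_rec)
  then show ?thesis by (simp add: poly_Xp algebra_simps power2_eq_square)
qed

end


lemma seg_ok:
  fixes w t :: complex
  assumes "w \<notin> \<real>\<^sub>\<le>\<^sub>0" "t \<in> closed_segment 1 w"
  shows "t \<notin> \<real>\<^sub>\<le>\<^sub>0"
proof
  assume t: "t \<in> \<real>\<^sub>\<le>\<^sub>0"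
  from assms(2) obtain u where u: "0 \<le> u" "u \<le> 1" "t = (1 - u) *\<^sub>R 1 + u *\<^sub>R w"
    unfolding closed_segment_def by auto
  have "Im t = u * Im w" "Re t = (1 - u) + u * Re w" using u by auto
  moreover have "Im t = 0" "Re t \<le> 0" using t by (auto simp: complex_nonpos_Reals_iff)
  ultimately have "u * Im w = 0" "(1 - u) + u * Re w \<le> 0" by auto
  show False
  proof (cases "u = 0")
    case True then show ?thesis using \<open>(1 - u) + u * Re w \<le> 0\<close> by simp
  next
    case False
    then have "Im w = 0" using \<open>u * Im w = 0\<close> by simp
    moreover have "Re w \<le> 0"
    proof (rule ccontr)
      assume "\<not> Re w \<le> 0"
      then have "u * Re w > 0" using u False by simp
      then show False using \<open>(1 - u) + u * Re w \<le> 0\<close> u False by linarith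
    qed
    ultimately have "w \<in> \<real>\<^sub>\<le>\<^sub>0" by (auto simp: complex_nonpos_Reals_iff)
    then show False using assms(1) by simp
  qed
qed

lemma prim:
  assumes "w \<notin> \<real>\<^sub>\<le>\<^sub>0"
    and "\<And>t. t \<notin> \<real>\<^sub>\<le>\<^sub>0 \<Longrightarrow> (G has_field_derivative g t) (at t)"
  shows "(g has_contour_integral (G w - G 1)) (linepath 1 w)"
proof -
  have d: "\<And>x. x \<in> closed_segment 1 w \<Longrightarrow> (G has_field_derivative g x) (at x within closed_segment 1 w)"
    by (rule has_field_derivative_at_within, rule assms(2), rule seg_ok[OF assms(1)])
  have "(g has_contour_integral (G (pathfinish (linepath 1 w)) - G (pathstart (linepath 1 w)))) (linepath 1 w)"
    by (rule contour_integral_primitive[where S = "closed_segment 1 w"])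
       (use d in auto)
  then show ?thesis by simp
qed

lemma powr_shift:
  fixes t x :: complex
  assumes "t \<noteq> 0" shows "t powr (x + of_nat j) = t powr x * t ^ j"
  using assms by (simp add: powr_add powr_nat')

lemma integrable_Jf:
  assumes "w \<notin> \<real>\<^sub>\<le>\<^sub>0"
  shows "(\<lambda>t. (1 - t) ^ k * (t - w) ^ k * t powr e) contour_integrable_on (linepath 1 w)"
proof (rule contour_integrable_continuous_linepath)
  show "continuous_on (closed_segment 1 w) (\<lambda>t. (1 - t) ^ k * (t - w) ^ k * t powr e)"
    by (intro continuous_at_imp_continuous_on ballI continuous_intros)
       (use seg_ok[OF assms] in auto)
qed


lemma ibp:
  fixes a w :: complex and m :: nat
  assumes w: "w \<notin> \<real>\<^sub>\<le>\<^sub>0"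
  defines "J \<equiv> \<lambda>k. contour_integral (linepath 1 w) (\<lambda>t. (1 - t) ^ k * (t - w) ^ k * t powr (- (of_nat k + 1 - a)))"
  shows "(of_nat m + 2 - a) * (of_nat m + 2 + a) * J (Suc (Suc m))
     = (2 * of_nat m + 3) * (of_nat m + 2) * (w + 1) * J (Suc m)
       - (of_nat m + 1) * (of_nat m + 2) * (w - 1)^2 * J m"
proof -
  define f where "f k t = (1 - t) ^ k * (t - w) ^ k * t powr (- (of_nat k + 1 - a))" for k t
  have hf: "(f k has_contour_integral J k) (linepath 1 w)" for k
    unfolding J_def f_def by (rule has_contour_integral_integral, rule integrable_Jf[OF w])
  define c1 where "c1 = (of_nat m + 2 - a) * (of_nat m + 2 + a)"
  define c2 where "c2 = (2 * of_nat m + 3) * (of_nat m + 2) * (w + 1)"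
  define c3 where "c3 = (of_nat m + 1) * (of_nat m + 2) * (w - 1)^2"
  have comb: "((\<lambda>t. c1 * f (Suc (Suc m)) t - c2 * f (Suc m) t + c3 * f m t) has_contour_integral
      (c1 * J (Suc (Suc m)) - c2 * J (Suc m) + c3 * J m)) (linepath 1 w)"
    by (intro has_contour_integral_add has_contour_integral_diff has_contour_integral_lmul hf)
  define q where "q t = w*(of_nat m+2+a) - a*(w+1)*t - (of_nat m+2-a)*t^2" for t
  define e where "e = a - of_nat m - 2"
  define g where "g t = (1-t)^(Suc m)*(t-w)^(Suc m)*(t powr e * q t)" for t
  define g' where "g' t = (of_nat (Suc m) * (- 1 * (1 - t) ^ (Suc m - Suc 0)) * (t-w)^(Suc m)
       + of_nat (Suc m) * (1 * (t - w) ^ (Suc m - Suc 0)) * (1-t)^(Suc m)) * (t powr e * q t)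
      + (e * t powr (e - 1) * q t + (- a*(w+1) - (of_nat m+2-a)*(2*t)) * t powr e) * ((1-t)^(Suc m)*(t-w)^(Suc m))" for t
  have dg: "(g has_field_derivative g' t) (at t)" if t: "t \<notin> \<real>\<^sub>\<le>\<^sub>0" for t
  proof -
    have d1: "((\<lambda>t. 1 - t) has_field_derivative - 1) (at t)" by (intro derivative_eq_intros) auto
    have d2: "((\<lambda>t. t - w) has_field_derivative 1) (at t)" by (intro derivative_eq_intros) auto
    have dq: "(q has_field_derivative (- a*(w+1) - (of_nat m+2-a)*(2*t))) (at t)"
      unfolding q_def[abs_def] by (rule derivative_eq_intros refl | simp)+
    have dC: "((\<lambda>t. t powr e) has_field_derivative e * t powr (e - 1)) (at t)"
      by (rule has_field_derivative_powr[OF t])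
    have "((\<lambda>t. (1-t)^(Suc m)*(t-w)^(Suc m)*(t powr e * q t)) has_field_derivative g' t) (at t)"
      unfolding g'_def
      by (rule DERIV_mult[OF DERIV_mult[OF DERIV_power[OF d1] DERIV_power[OF d2]] DERIV_mult[OF dC dq]])
    then show ?thesis by (simp add: g_def[abs_def])
  qed
  have pg: "(g' has_contour_integral (g w - g 1)) (linepath 1 w)"
    by (rule prim[OF w dg])
  have g0: "g w - g 1 = 0" by (simp add: g_def)
  have eq: "g' t = c1 * f (Suc (Suc m)) t - c2 * f (Suc m) t + c3 * f m t"
    if "t \<in> path_image (linepath 1 w)" for t
  proof -
    have t: "t \<notin> \<real>\<^sub>\<le>\<^sub>0" using seg_ok[OF w] that by simp
    then have t0: "t \<noteq> 0" by auto
    define T where "T = t powr (a - of_nat m - 3)"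
    have p1: "t powr e = T * t"
      using powr_shift[OF t0, of "a - of_nat m - 3" 1] by (simp add: T_def e_def)
    have p2: "t powr (e - 1) = T"
      by (simp add: T_def e_def algebra_simps)
    have p3: "t powr (- (of_nat (Suc (Suc m)) + 1 - a)) = T"
      by (simp add: T_def algebra_simps)
    have p4: "t powr (- (of_nat (Suc m) + 1 - a)) = T * t"
      using powr_shift[OF t0, of "a - of_nat m - 3" 1] by (simp add: T_def algebra_simps)
    have p5: "t powr (- (of_nat m + 1 - a)) = T * t^2"
      using powr_shift[OF t0, of "a - of_nat m - 3" 2] by (simp add: T_def algebra_simps)
    show ?thesis
      unfolding g'_def f_def q_def c1_def c2_def c3_def p1 p2 p3 p4 p5
      unfolding power_Suc of_nat_Suc e_def diff_Suc_Suc minus_nat.diff_0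
      by algebra
  qed
  have "((\<lambda>t. c1 * f (Suc (Suc m)) t - c2 * f (Suc m) t + c3 * f m t) has_contour_integral 0) (linepath 1 w)"
    using has_contour_integral_eq[OF pg eq] g0 by simp
  from has_contour_integral_unique[OF comb this]
  show ?thesis unfolding c1_def c2_def c3_def by (simp add: algebra_simps)
qed


lemma alpha_ok:
  assumes "n \<ge> 2" shows "alph (1 / of_nat n)"
proof
  fix i :: nat
  show "1 - 1 / of_nat n + of_nat i \<noteq> (0::complex)"
  proof
    assume h: "1 - 1 / of_nat n + of_nat i = (0::complex)"
    have n0: "(of_nat n :: complex) \<noteq> 0" using assms by simp
    from h have e: "1 + of_nat i = (1::complex) / of_nat n" by algebra
    have "(1 + of_nat i) * of_nat n = (1::complex)" using n0 by (simp add: e)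
    then have "of_nat ((1 + i) * n) = (of_nat 1 :: complex)" by (simp only: of_nat_mult of_nat_add of_nat_1)
    then have "(1 + i) * n = 1" using of_nat_eq_iff by blast
    then show False using assms by simp
  qed
qed

lemma Xs_dehom:
  assumes "b \<noteq> 0"
  shows "Xnr_star n r a' b = b ^ r * (\<Sum>k\<le>r. cf (1 / of_nat n) r k * (a' / b) ^ k)"
  unfolding Xnr_star_def sum_distrib_left
proof (rule sum.cong[OF refl])
  fix k assume "k \<in> {..r}"
  then have "b ^ r = b ^ (r - k) * b ^ k" by (simp add: power_add[symmetric])
  then show "Xnr_coeff n r k * a' ^ k * b ^ (r - k) = b ^ r * (cf (1 / of_nat n) r k * (a' / b) ^ k)"
    using assms by (simp add: Xnr_coeff_cf power_divide)
qed

lemma Xs_rec_alg: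
  fixes c d e t b a' B S0 S1 S2 :: complex
  assumes "c * S2 = e * (1 + t) * S1 - d * (1 - t)^2 * S0" "t * b = a'"
  shows "c * (b * (b * B) * S2) = e * (a' + b) * (b * B * S1) - d * (a' - b)^2 * (B * S0)"
  using assms by algebra

lemma Xs_rec:
  assumes n: "n \<ge> 2" and b: "b \<noteq> 0"
  shows "(of_nat m + 2 - 1 / of_nat n) * Xnr_star n (Suc (Suc m)) a' b
    = (2 * of_nat m + 3) * (a' + b) * Xnr_star n (Suc m) a' b
      - (of_nat m + 1 + 1 / of_nat n) * (a' - b)^2 * Xnr_star n m a' b"
proof -
  interpret alph "1 / of_nat n" by (rule alpha_ok[OF n])
  define t where "t = a' / b"
  have tb: "t * b = a'" using b by (simp add: t_def)
  define S where "S r = (\<Sum>k\<le>r. cf (1 / of_nat n) r k * t ^ k)" for r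
  have X: "Xnr_star n r a' b = b ^ r * S r" for r
    unfolding S_def t_def by (rule Xs_dehom[OF b])
  have R: "(of_nat m + 2 - 1 / of_nat n) * S (Suc (Suc m))
   = (2 * of_nat m + 3) * (1 + t) * S (Suc m)
     - (of_nat m + 1 + 1 / of_nat n) * (1 - t)^2 * S m"
    unfolding S_def by (rule Xsum_rec)
  define c where "c = (of_nat m + 2 - 1 / of_nat n :: complex)"
  define d where "d = (of_nat m + 1 + 1 / of_nat n :: complex)"
  define e where "e = (2 * of_nat m + 3 :: complex)"
  have R': "c * S (Suc (Suc m)) = e * (1 + t) * S (Suc m) - d * (1 - t)^2 * S m"
    using R unfolding c_def d_def e_def .
  have "c * (b ^ Suc (Suc m) * S (Suc (Suc m))) = e * (a' + b) * (b ^ Suc m * S (Suc m)) - d * (a' - b)^2 * (b ^ m * S m)"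
    unfolding power_Suc by (rule Xs_rec_alg[OF R' tb])
  then show ?thesis unfolding X c_def d_def e_def .
qed


lemma not_nonpos_Int: "Re (z::complex) > 0 \<Longrightarrow> z \<notin> \<int>\<^sub>\<le>\<^sub>0"
  using nonpos_Ints_subset_nonpos_Reals by (auto simp: complex_nonpos_Reals_iff)

lemma J0:
  fixes a w :: complex
  assumes w: "w \<notin> \<real>\<^sub>\<le>\<^sub>0" and a: "a \<noteq> 0"
  shows "contour_integral (linepath 1 w) (\<lambda>t. (1 - t) ^ 0 * (t - w) ^ 0 * t powr (- (of_nat 0 + 1 - a)))
     = (w powr a - 1) / a"
proof -
  have d: "((\<lambda>t. t powr a / a) has_field_derivative (1 - t) ^ 0 * (t - w) ^ 0 * t powr (- (of_nat 0 + 1 - a))) (at t)"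
    if t: "t \<notin> \<real>\<^sub>\<le>\<^sub>0" for t
    by (rule DERIV_cong[OF DERIV_cdivide[OF has_field_derivative_powr[OF t]]]) (use a in simp)
  have "((\<lambda>t. (1 - t) ^ 0 * (t - w) ^ 0 * t powr (- (of_nat 0 + 1 - a))) has_contour_integral
         (w powr a / a - 1 powr a / a)) (linepath 1 w)"
    by (rule prim[OF w d])
  then show ?thesis by (simp add: contour_integral_unique diff_divide_distrib)
qed

lemma J1:
  fixes a w :: complex
  assumes w: "w \<notin> \<real>\<^sub>\<le>\<^sub>0" and a: "a \<noteq> 0" "a + 1 \<noteq> 0" "a - 1 \<noteq> 0"
  defines "Q \<equiv> \<lambda>t. (- (t^2)) / (a + 1) + (1 + w) * t / a - w / (a - 1)"
  shows "contour_integral (linepath 1 w) (\<lambda>t. (1 - t) ^ 1 * (t - w) ^ 1 * t powr (- (of_nat 1 + 1 - a)))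
     = w powr a / w * Q w - Q 1"
proof -
  have d: "((\<lambda>t. t powr (a - 1) * Q t) has_field_derivative (1 - t) ^ 1 * (t - w) ^ 1 * t powr (- (of_nat 1 + 1 - a))) (at t)"
    if t: "t \<notin> \<real>\<^sub>\<le>\<^sub>0" for t
  proof -
    have t0: "t \<noteq> 0" using t by auto
    have dQ: "(Q has_field_derivative (- (2 * t) / (a + 1) + (1 + w) / a)) (at t)"
    proof -
      have Qeq: "Q = (\<lambda>t. (-1/(a+1)) * t^2 + ((1+w)/a) * t - w/(a-1))"
        by (auto simp: Q_def fun_eq_iff)
      show ?thesis unfolding Qeq by (rule derivative_eq_intros refl | simp)+
    qed
    define T where "T = t powr (a - 2)"
    have p1: "t powr (a - 1 - 1) = T" by (simp add: T_def)
    have p2: "t powr (a - 1) = T * t"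
      using powr_shift[OF t0, of "a - 2" 1] by (simp add: T_def)
    have p3: "t powr (- (of_nat 1 + 1 - a)) = T" by (simp add: T_def)
    define i1 where "i1 = 1 / (a + 1)"
    define i2 where "i2 = 1 / a"
    define i3 where "i3 = 1 / (a - 1)"
    have h1: "i1 * (a + 1) = 1" using a by (simp add: i1_def)
    have h2: "i2 * a = 1" using a by (simp add: i2_def)
    have h3: "i3 * (a - 1) = 1" using a by (simp add: i3_def)
    have r1: "\<And>N. N / (a + 1) = N * i1" "\<And>N. N / a = N * i2" "\<And>N. N / (a - 1) = N * i3"
      by (simp_all add: i1_def i2_def i3_def)
    show ?thesis
      apply (rule DERIV_cong[OF DERIV_mult[OF has_field_derivative_powr[OF t] dQ]])
      unfolding p1 p2 p3 Q_def r1 using h1 h2 h3 by algebra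
  qed
  have "((\<lambda>t. (1 - t) ^ 1 * (t - w) ^ 1 * t powr (- (of_nat 1 + 1 - a))) has_contour_integral
         (w powr (a - 1) * Q w - 1 powr (a - 1) * Q 1)) (linepath 1 w)"
    by (rule prim[OF w d])
  then show ?thesis by (simp add: contour_integral_unique powr_diff)
qed


locale setup_n =
  fixes n :: nat
  assumes n2: "n \<ge> 2"
begin

definition al :: complex where "al = 1 / of_nat n"

lemma n0: "(of_nat n :: complex) \<noteq> 0" using n2 by simp

lemma Re_al: "Re al > 0" using n2 by (simp add: al_def)

lemma al_real: "al = of_real (1 / real n)" by (simp add: al_def)

lemma al_lt1: "Re al < 1" using n2 by (simp add: al_def)

lemma al0: "al \<noteq> 0" using Re_al by auto
lemma al1: "al + 1 \<noteq> 0" using Re_al by (metis add.commute add_cancel_right_right al0 al_real Re_complex_of_real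
    complex_of_real_def less_numeral_extra(3) neg_eq_iff_add_eq_0 one_complex.sel(1) uminus_complex.sel(1) zero_less_one
    Re_al add_less_same_cancel2 less_trans zero_complex.sel(1))
lemma al2: "al - 1 \<noteq> 0" using al_lt1 by auto
lemma cm_nz: "(of_nat m + 2 - al) \<noteq> 0"
proof
  assume "of_nat m + 2 - al = 0"
  then have "Re (of_nat m + 2 - al) = 0" by simp
  then show False using al_lt1 by simp
qed

lemma Re_pos_shift: "Re (of_nat k + 1 + al) > 0" using Re_al by simp

definition gm :: "nat \<Rightarrow> complex" where
  "gm k = Gamma (of_nat k + 1 + al) / (fact k * Gamma al)"

lemma Ga: "Gamma al \<noteq> 0" by (rule Gamma_nonzero, rule not_nonpos_Int, rule Re_al)

lemma gm_Suc: "gm (Suc k) = (of_nat k + 1 + al) * (1 / (of_nat k + 1)) * gm k"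
proof -
  have "Gamma (of_nat (Suc k) + 1 + al) = (of_nat k + 1 + al) * Gamma (of_nat k + 1 + al)"
  proof -
    have e: "of_nat (Suc k) + 1 + al = (of_nat k + 1 + al) + 1" by simp
    show ?thesis by (subst e, rule Gamma_plus1[OF not_nonpos_Int[OF Re_pos_shift[of k]]])
  qed
  moreover have "(of_nat k + 1 :: complex) \<noteq> 0" by (metis of_nat_Suc of_nat_eq_0_iff nat.distinct(1) add.commute)
  ultimately show ?thesis unfolding gm_def using Ga by (simp add: field_simps)
qed

lemma gm0: "gm 0 = al"
  unfolding gm_def using Gamma_plus1[OF not_nonpos_Int[OF Re_al]] Ga by (simp add: add.commute)

definition Jw :: "complex \<Rightarrow> nat \<Rightarrow> complex" where
  "Jw w k = contour_integral (linepath 1 w) (\<lambda>t. (1 - t) ^ k * (t - w) ^ k * t powr (- (of_nat k + 1 - al)))"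

lemma Rnr_eq: "Rnr n k w = gm k * Jw w k"
  unfolding Rnr_def gm_def Jw_def al_def by (simp add: add.commute add.left_commute)


lemma Rrec:
  assumes w: "w \<notin> \<real>\<^sub>\<le>\<^sub>0"
  shows "(of_nat m + 2 - al) * Rnr n (Suc (Suc m)) w
     = (2 * of_nat m + 3) * (w + 1) * Rnr n (Suc m) w - (of_nat m + 1 + al) * (w - 1)^2 * Rnr n m w"
proof -
  have I: "(of_nat m + 2 - al) * (of_nat m + 2 + al) * Jw w (Suc (Suc m))
     = (2 * of_nat m + 3) * (of_nat m + 2) * (w + 1) * Jw w (Suc m)
       - (of_nat m + 1) * (of_nat m + 2) * (w - 1)^2 * Jw w m"
    unfolding Jw_def by (rule ibp[OF w])
  have g2: "gm (Suc (Suc m)) = (of_nat m + 2 + al) * (1 / (of_nat m + 2)) * gm (Suc m)"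
    using gm_Suc[of "Suc m"] by (simp add: add.commute add.left_commute)
  have g1: "gm (Suc m) = (of_nat m + 1 + al) * (1 / (of_nat m + 1)) * gm m"
    using gm_Suc[of m] by simp
  define i1 where "i1 = 1 / (of_nat m + 1 :: complex)"
  define i2 where "i2 = 1 / (of_nat m + 2 :: complex)"
  have h1: "i1 * (of_nat m + 1) = 1" unfolding i1_def
    by (metis divide_self_if mult.commute of_nat_Suc of_nat_eq_0_iff nat.distinct(1) add.commute times_divide_eq_right mult_1)
  have h2: "i2 * (of_nat m + 2) = 1" unfolding i2_def
    using of_nat_eq_0_iff[of "m+2", where 'a=complex] by (simp add: add.commute)
  show ?thesis unfolding Rnr_eq g2 g1 i1_def[symmetric] i2_def[symmetric]
    using I h1 h2 by algebra
qed

lemma R0: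
  assumes w: "w \<notin> \<real>\<^sub>\<le>\<^sub>0"
  shows "Rnr n 0 w = w powr al - 1"
proof -
  have "Jw w 0 = (w powr al - 1) / al" unfolding Jw_def by (rule J0[OF w al0])
  then show ?thesis unfolding Rnr_eq gm0 using al0 by simp
qed

lemma Xs0: "Xnr_star n 0 x y = 1"
  by (simp add: Xnr_star_def Xnr_coeff_def)

lemma Xs1: "Xnr_star n 1 x y = y + x * ((1 + al) / (1 - al))"
proof -
  interpret alph al using alpha_ok[OF n2] by (simp add: al_def)
  have e1: "Xnr_star n 1 x y = Xnr_coeff n 1 0 * y + Xnr_coeff n 1 1 * x"
    by (simp add: Xnr_star_def)
  have e2: "Xnr_coeff n 1 1 = (1 + al) / (1 - al)"
    unfolding Xnr_coeff_cf cf_1 al_def[symmetric] by (simp add: algebra_simps)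
  show ?thesis unfolding e1 e2 by (simp add: Xnr_coeff_cf)
qed

lemma R1:
  assumes w: "w \<notin> \<real>\<^sub>\<le>\<^sub>0"
  shows "Rnr n 1 w = w powr al * Xnr_star n 1 1 w - Xnr_star n 1 w 1"
proof -
  have w0: "w \<noteq> 0" using w by auto
  have J: "Jw w 1 = w powr al / w * ((- (w^2)) / (al + 1) + (1 + w) * w / al - w / (al - 1))
      - ((- (1^2)) / (al + 1) + (1 + w) * 1 / al - w / (al - 1))"
    unfolding Jw_def by (rule J1[OF w al0 al1 al2])
  have g: "gm 1 = (1 + al) * al" using gm_Suc[of 0] gm0 by simp
  define W where "W = w powr al"
  define i1 where "i1 = 1 / (al + 1)"
  define i2 where "i2 = 1 / al"
  define i3 where "i3 = 1 / (al - 1)"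
  define i4 where "i4 = 1 / (1 - al)"
  define iw where "iw = 1 / w"
  have h: "i1 * (al + 1) = 1" "i2 * al = 1" "i3 * (al - 1) = 1" "i4 * (1 - al) = 1" "iw * w = 1"
    using al0 al1 al2 w0 by (auto simp: i1_def i2_def i3_def i4_def iw_def)
  have r: "\<And>N. N / (al + 1) = N * i1" "\<And>N. N / al = N * i2" "\<And>N. N / (al - 1) = N * i3"
     "\<And>N. N / (1 - al) = N * i4" "\<And>N. N / w = N * iw"
    by (simp_all add: i1_def i2_def i3_def i4_def iw_def)
  show ?thesis unfolding Rnr_eq J g Xs1 W_def[symmetric] r power_one using h by algebra
qed

lemma Rclosed:
  assumes w: "w \<notin> \<real>\<^sub>\<le>\<^sub>0"
  shows "Rnr n r w = w powr al * Xnr_star n r 1 w - Xnr_star n r w 1"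
proof -
  have w0: "w \<noteq> 0" using w by auto
  define P where "P r \<longleftrightarrow> Rnr n r w = w powr al * Xnr_star n r 1 w - Xnr_star n r w 1" for r
  have "P m \<and> P (Suc m)" for m
  proof (induction m)
    case 0
    have "P 0" unfolding P_def R0[OF w] Xs0 by simp
    moreover have "P 1" unfolding P_def by (rule R1[OF w])
    ultimately show ?case by simp
  next
    case (Suc m)
    have A: "Rnr n m w = w powr al * Xnr_star n m 1 w - Xnr_star n m w 1"
      and B: "Rnr n (Suc m) w = w powr al * Xnr_star n (Suc m) 1 w - Xnr_star n (Suc m) w 1"
      using Suc.IH unfolding P_def by blast+
    have X1: "(of_nat m + 2 - al) * Xnr_star n (Suc (Suc m)) 1 w
      = (2 * of_nat m + 3) * (1 + w) * Xnr_star n (Suc m) 1 w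
        - (of_nat m + 1 + al) * (1 - w)^2 * Xnr_star n m 1 w"
      unfolding al_def by (rule Xs_rec[OF n2 w0])
    have X2: "(of_nat m + 2 - al) * Xnr_star n (Suc (Suc m)) w 1
      = (2 * of_nat m + 3) * (w + 1) * Xnr_star n (Suc m) w 1
        - (of_nat m + 1 + al) * (w - 1)^2 * Xnr_star n m w 1"
      unfolding al_def by (rule Xs_rec[OF n2], simp)
    have "(of_nat m + 2 - al) * Rnr n (Suc (Suc m)) w
       = (of_nat m + 2 - al) * (w powr al * Xnr_star n (Suc (Suc m)) 1 w - Xnr_star n (Suc (Suc m)) w 1)"
      unfolding Rrec[OF w] A B using X1 X2 by algebra
    then have "P (Suc (Suc m))" unfolding P_def using cm_nz[of m] mult_left_cancel by blast
    then show ?case using Suc.IH by simp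
  qed
  then show ?thesis unfolding P_def by blast
qed

end


lemma U_form:
  fixes U :: "complex poly"
  assumes "degree U = 2" shows "U = [:coeff U 0, coeff U 1, coeff U 2:]"
proof (rule poly_eqI)
  fix i show "coeff U i = coeff [:coeff U 0, coeff U 1, coeff U 2:] i"
  proof (cases "i \<le> 2")
    case True then have "i = 0 \<or> i = 1 \<or> i = 2" by auto
    then show ?thesis by (auto simp: numeral_2_eq_2)
  next
    case False
    then have "coeff U i = 0" using assms by (simp add: coeff_eq_0)
    moreover have "i = Suc (Suc (Suc (i - 3)))" using False by simp
    ultimately show ?thesis by (metis coeff_pCons_Suc coeff_pCons_0 pCons_0_0 coeff_0)
  qed
qed

lemma U_vals:
  fixes U :: "complex poly"
  assumes "degree U = 2"
  shows "poly U x = coeff U 0 + coeff U 1 * x + coeff U 2 * x^2"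
    "poly (pderiv U) x = coeff U 1 + 2 * coeff U 2 * x"
    "poly (pderiv (pderiv U)) x = 2 * coeff U 2"
proof -
  define c0 c1 c2 where "c0 = coeff U 0" "c1 = coeff U 1" "c2 = coeff U 2"
  have U: "U = [:c0, c1, c2:]" using U_form[OF assms] by (simp add: c0_c1_c2_def)
  show "poly U x = coeff U 0 + coeff U 1 * x + coeff U 2 * x^2"
    unfolding c0_c1_c2_def[symmetric] by (subst U) (simp add: algebra_simps power2_eq_square)
  show "poly (pderiv U) x = coeff U 1 + 2 * coeff U 2 * x"
    unfolding c0_c1_c2_def[symmetric] by (subst U) (simp add: pderiv_pCons algebra_simps)
  show "poly (pderiv (pderiv U)) x = 2 * coeff U 2"
    unfolding c0_c1_c2_def[symmetric] by (subst U) (simp add: pderiv_pCons algebra_simps)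
qed

lemma h_val:
  assumes "degree U = 2"
  shows "poly (h_poly n U) x = (of_nat n ^ 2 - 1) / 4 * quad_disc U"
  unfolding h_poly_def quad_disc_def using U_vals[OF assms, of x]
  by (simp add: algebra_simps power2_eq_square)

lemma lam_val:
  assumes "degree U = 2" "n \<ge> 2"
  shows "lam n U = quad_disc U / 4"
proof -
  have "(of_nat n ^ 2 - 1 :: complex) \<noteq> 0"
  proof
    assume "(of_nat n ^ 2 - 1 :: complex) = 0"
    then have "(of_nat (n^2) :: complex) = of_nat 1" by simp
    then have "n^2 = 1" using of_nat_eq_iff by blast
    then show False using assms(2) by (simp add: power2_eq_square)
  qed
  have g: "\<And>x D. x \<noteq> 0 \<Longrightarrow> x / 4 * D / x = D / (4::complex)" by simp
  show ?thesis unfolding lam_def poly_0_coeff_0[symmetric] h_val[OF assms(1)] by (rule g) fact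
qed


lemma numA:
  fixes U P :: "complex poly" and s :: complex
  assumes s: "s \<noteq> 0" and hs: "\<And>y. poly (h_poly n U) y = (of_nat n ^ 2 - 1) * s^2"
  shows "smult ((of_nat n - 1) * s / 2) (A1_poly n U P) - smult (1 / (4 * s)) (Y1_poly n U P * A0_poly n U)
       = P * smult ((of_nat n ^ 2 - 1) * s / 6) (pderiv U)"
proof (rule poly_eq_poly_eq_iff[THEN iffD1], rule ext)
  fix y
  define iS where "iS = 1 / s"
  have hi: "iS * s = 1" using s by (simp add: iS_def)
  have r: "1 / (4 * s) = iS / 4" by (simp add: iS_def)
  show "poly (smult ((of_nat n - 1) * s / 2) (A1_poly n U P) - smult (1 / (4 * s)) (Y1_poly n U P * A0_poly n U)) y
       = poly (P * smult ((of_nat n ^ 2 - 1) * s / 6) (pderiv U)) y"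
    unfolding A1_poly_def Y1_poly_def A0_poly_def r
    by (simp add: hs) (use hi in algebra)
qed

lemma numB:
  fixes U P :: "complex poly" and s :: complex
  assumes s: "s \<noteq> 0" and hs: "\<And>y. poly (h_poly n U) y = (of_nat n ^ 2 - 1) * s^2"
  shows "smult ((of_nat n - 1) * s / 2) (B1_poly n U P) - smult (1 / (4 * s)) (Y1_poly n U P * B0_poly n U)
       = P * (smult ((of_nat n ^ 2 - 1) * s / 6) ([:0, 1:] * pderiv U) - smult ((of_nat n ^ 2 - 1) * s / 3) U)"
proof (rule poly_eq_poly_eq_iff[THEN iffD1], rule ext)
  fix y
  define iS where "iS = 1 / s"
  have hi: "iS * s = 1" using s by (simp add: iS_def)
  have r: "1 / (4 * s) = iS / 4" by (simp add: iS_def)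
  show "poly (smult ((of_nat n - 1) * s / 2) (B1_poly n U P) - smult (1 / (4 * s)) (Y1_poly n U P * B0_poly n U)) y
       = poly (P * (smult ((of_nat n ^ 2 - 1) * s / 6) ([:0, 1:] * pderiv U) - smult ((of_nat n ^ 2 - 1) * s / 3) U)) y"
    unfolding B1_poly_def A1_poly_def Y1_poly_def B0_poly_def r
    by (simp add: hs field_simps) (use hi in algebra)
qed


lemma alg_base1:
  fixes s nn iN iS ik x be U0 U1 Px P1 H K A1x B1x Yx z u a b c d :: complex
  assumes hN: "iN * nn = 1" and hS: "iS * s = 1" and hk: "ik * (1 - iN) = 1"
    and e_H: "H = (nn^2 - 1) * s^2"
    and e_K: "K = (nn^2 - 1) * s / 6"
    and e_A1x: "A1x = 2 * (nn + 1) / 3 * (U0 * P1 - (nn - 1) / 2 * (U1 * Px))"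
    and e_B1x: "B1x = x * A1x - 2 * (nn + 1) / 3 * (U0 * Px)"
    and e_Yx: "Yx = 2 * (U0 * P1) - nn * (U1 * Px)"
    and e_z: "z = (Yx * (iS * iN / 2) + Px) / 2"
    and e_u: "u = (Yx * (iS * iN / 2) - Px) / 2"
    and e_a: "a = K * U1 + 1/2 * (2/3 * H)"
    and e_b: "b = K * U1 + (-1/2) * (2/3 * H)"
    and e_c: "c = K * x * U1 - 2 * K * U0 + 1/2 * (2/3 * H * x)"
    and e_d: "d = K * x * U1 - 2 * K * U0 + (-1/2) * (2/3 * H * x)"
  shows "s * (be * A1x - B1x) = (be * a - c) * (u + z * ((1 + iN) * ik)) - (be * b - d) * (z + u * ((1 + iN) * ik))"
  unfolding e_a e_b e_c e_d e_z e_u e_Yx e_A1x e_B1x e_K e_H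
  apply (simp add: field_simps)
  using hN hS hk by algebra

lemma alg_rec:
  fixes s nn iN iS iQ mm be Yx Px Ax0 Ax1 Bx0 Bx1 S z u Ax2 Bx2 :: complex
  assumes hN: "iN * nn = 1" and hS: "iS * s = 1" and hQ: "iQ * (s^2 * (nn * (mm + 1 + 1) - 1)) = 1"
    and e_z: "z = (Yx * (iS * iN / 2) + Px) / 2"
    and e_u: "u = (Yx * (iS * iN / 2) - Px) / 2"
    and e_Ax2: "Ax2 = iQ * ((mm + 1 + 1/2) * (Yx * Ax1) - (nn * (mm + 1) + 1) * (Px^2 * Ax0))"
    and e_Bx2: "Bx2 = iQ * ((mm + 1 + 1/2) * (Yx * Bx1) - (nn * (mm + 1) + 1) * (Px^2 * Bx0))"
  shows "(mm + 2 - iN) * (s * (s * S) * (be * Ax2 - Bx2))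
    = (2 * mm + 3) * (z + u) * (s * S * (be * Ax1 - Bx1)) - (mm + 1 + iN) * (z - u)^2 * (S * (be * Ax0 - Bx0))"
  unfolding e_z e_u e_Ax2 e_Bx2
  apply (simp add: field_simps)
  using hN hS hQ by algebra


theorem lemma2p3:
  fixes n r :: nat and P U :: "complex poly" and \<beta> s x :: complex
  assumes "n \<ge> 2" and "r \<ge> 1"
    and "degree P = n" and "degree U = 2" and "quad_disc U \<noteq> 0"
    and "U * pderiv (pderiv P) - smult (of_nat n - 1) (pderiv U * pderiv P)
         + smult (of_nat n * (of_nat n - 1) / 2) (pderiv (pderiv U) * P) = 0"
    and "poly P \<beta> = 0"
    and "s ^ 2 = lam n U"
    and "x \<noteq> 0"
  defines "z \<equiv> z_val n U P s x"
    and "u \<equiv> u_val n U P s x"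
    and "w \<equiv> z_val n U P s x / u_val n U P s x"
    and "a \<equiv> poly (coef_poly n s P (Y1_poly n U P) (A1_poly n U P) (A0_poly n U) (1/2)) x"
    and "b \<equiv> poly (coef_poly n s P (Y1_poly n U P) (A1_poly n U P) (A0_poly n U) (-1/2)) x"
    and "c \<equiv> poly (coef_poly n s P (Y1_poly n U P) (B1_poly n U P) (B0_poly n U) (1/2)) x"
    and "d \<equiv> poly (coef_poly n s P (Y1_poly n U P) (B1_poly n U P) (B0_poly n U) (-1/2)) x"
  assumes "w \<notin> \<real>\<^sub>\<le>\<^sub>0"
  shows "s ^ r * (\<beta> * poly (A_seq n U P r) x - poly (B_seq n U P r) x)
         = (\<beta> * (a * w powr (1 / of_nat n) - b) - (c * w powr (1 / of_nat n) - d)) * Xnr_star n r u z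
           - (\<beta> * a - c) * u ^ r * Rnr n r w"
proof -
  note n2 = assms(1) and degU = assms(4) and wR = assms(17)
  interpret setup_n n using n2 by unfold_locales
  have lamv: "lam n U = quad_disc U / 4" by (rule lam_val[OF degU n2])
  have s0: "s \<noteq> 0" using assms(8) assms(5) lamv by auto
  have hs: "\<And>y. poly (h_poly n U) y = (of_nat n ^ 2 - 1) * s^2"
    unfolding h_val[OF degU] assms(8) lamv by simp
  have P0: "P \<noteq> 0" using assms(3) n2 by auto
  have w0: "w \<noteq> 0" using wR by auto
  have u0: "u \<noteq> 0" using w0 unfolding w_def u_def by auto
  have z0: "z \<noteq> 0" using w0 unfolding w_def z_def by auto
  have zwu: "z = w * u" using u0 unfolding w_def z_def u_def by simp
  define K where "K = (of_nat n ^ 2 - 1) * s / 6"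
  define H where "H = (of_nat n ^ 2 - 1) * s^2"
  have A0x: "poly (A0_poly n U) y = 2/3 * H" for y by (simp add: A0_poly_def hs H_def)
  have B0x: "poly (B0_poly n U) y = 2/3 * H * y" for y by (simp add: B0_poly_def hs H_def)
  have av: "a = K * poly (pderiv U) x + 1/2 * (2/3 * H)"
    unfolding a_def coef_poly_def numA[OF s0 hs] nonzero_mult_div_cancel_left[OF P0]
    by (simp add: A0x K_def)
  have bv: "b = K * poly (pderiv U) x + (-1/2) * (2/3 * H)"
    unfolding b_def coef_poly_def numA[OF s0 hs] nonzero_mult_div_cancel_left[OF P0]
    by (simp add: A0x K_def)
  have cv: "c = K * x * poly (pderiv U) x - 2 * K * poly U x + 1/2 * (2/3 * H * x)"
    unfolding c_def coef_poly_def numB[OF s0 hs] nonzero_mult_div_cancel_left[OF P0]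
    by (simp add: B0x K_def field_simps)
  have dv: "d = K * x * poly (pderiv U) x - 2 * K * poly U x + (-1/2) * (2/3 * H * x)"
    unfolding d_def coef_poly_def numB[OF s0 hs] nonzero_mult_div_cancel_left[OF P0]
    by (simp add: B0x K_def field_simps)
  define nn where "nn = (of_nat n :: complex)"
  define iN where "iN = 1 / nn"
  define iS where "iS = 1 / s"
  define ik where "ik = 1 / (1 - iN)"
  have nn0: "nn \<noteq> 0" unfolding nn_def using n2 by simp
  have hN: "iN * nn = 1" using nn0 by (simp add: iN_def)
  have hS: "iS * s = 1" using s0 by (simp add: iS_def)
  have alN: "al = iN" by (simp add: al_def iN_def nn_def)
  have hk: "ik * (1 - iN) = 1" using al2 unfolding ik_def alN[symmetric] by (simp add: algebra_simps)
  define U0 where "U0 = poly U x"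
  define U1 where "U1 = poly (pderiv U) x"
  define Px where "Px = poly P x"
  define P1 where "P1 = poly (pderiv P) x"
  define Yx where "Yx = poly (Y1_poly n U P) x"
  define Ax where "Ax r = poly (A_seq n U P r) x" for r
  define Bx where "Bx r = poly (B_seq n U P r) x" for r
  have eYx: "Yx = 2 * (U0 * P1) - nn * (U1 * Px)"
    by (simp add: Yx_def Y1_poly_def U0_def U1_def Px_def P1_def nn_def)
  have ez: "z = (Yx * (iS * iN / 2) + Px) / 2"
    by (simp add: z_def z_val_def Yx_def iS_def iN_def nn_def Px_def)
  have eu: "u = (Yx * (iS * iN / 2) - Px) / 2"
    by (simp add: u_def u_val_def Yx_def iS_def iN_def nn_def Px_def)
  have eH: "H = (nn^2 - 1) * s^2" by (simp add: H_def nn_def)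
  have eK: "K = (nn^2 - 1) * s / 6" by (simp add: K_def nn_def)
  have ea: "a = K * U1 + 1/2 * (2/3 * H)" using av by (simp add: U1_def)
  have eb: "b = K * U1 + (-1/2) * (2/3 * H)" using bv by (simp add: U1_def)
  have ec: "c = K * x * U1 - 2 * K * U0 + 1/2 * (2/3 * H * x)" using cv by (simp add: U1_def U0_def)
  have ed: "d = K * x * U1 - 2 * K * U0 + (-1/2) * (2/3 * H * x)" using dv by (simp add: U1_def U0_def)
  have eA1: "Ax 1 = 2 * (nn + 1) / 3 * (U0 * P1 - (nn - 1) / 2 * (U1 * Px))"
    by (simp add: Ax_def A_seq_def A1_poly_def nn_def U0_def U1_def Px_def P1_def)
  have eB1: "Bx 1 = x * Ax 1 - 2 * (nn + 1) / 3 * (U0 * Px)"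
    by (simp add: Ax_def Bx_def A_seq_def B_seq_def B1_poly_def nn_def U0_def Px_def)
  define D where "D r = s ^ r * (\<beta> * Ax r - Bx r)" for r
  define T where "T r = (\<beta> * a - c) * Xnr_star n r z u - (\<beta> * b - d) * Xnr_star n r u z" for r
  have D0: "D 0 = T 0"
    by (simp add: D_def T_def Xs0 Ax_def Bx_def A_seq_def B_seq_def A0x B0x ea eb ec ed algebra_simps)
  have D1: "D 1 = T 1"
  proof -
    have k: "(1 + al) / (1 - al) = (1 + iN) * ik" by (simp add: alN ik_def)
    show ?thesis unfolding D_def T_def Xs1 k power_one_right
      by (rule alg_base1[OF hN hS hk eH eK eA1 eB1 eYx ez eu ea eb ec ed])
  qed
  have iNn: "1 / of_nat n = iN" by (simp add: iN_def nn_def)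
  have Drec: "(of_nat m + 2 - iN) * D (Suc (Suc m)) = (2 * of_nat m + 3) * (z + u) * D (Suc m)
      - (of_nat m + 1 + iN) * (z - u)^2 * D m" for m
  proof -
    define iQ where "iQ = 1 / (s^2 * (nn * (of_nat m + 1 + 1) - 1))"
    have q0: "nn * (of_nat m + 1 + 1) - 1 \<noteq> 0"
    proof
      assume "nn * (of_nat m + 1 + 1) - 1 = 0"
      then have "iN * (nn * (of_nat m + 1 + 1) - 1) = 0" by simp
      then have "of_nat m + 2 - al = 0" using hN unfolding alN by algebra
      then show False using cm_nz[of m] by simp
    qed
    have hQ: "iQ * (s^2 * (nn * (of_nat m + 1 + 1) - 1)) = 1" using q0 s0 by (simp add: iQ_def)
    have eA2: "Ax (Suc (Suc m)) = iQ * ((of_nat m + 1 + 1/2) * (Yx * Ax (Suc m)) - (nn * (of_nat m + 1) + 1) * (Px^2 * Ax m))"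
      by (simp add: Ax_def A_seq_def iQ_def Yx_def Px_def nn_def assms(8)[symmetric] algebra_simps)
    have eB2: "Bx (Suc (Suc m)) = iQ * ((of_nat m + 1 + 1/2) * (Yx * Bx (Suc m)) - (nn * (of_nat m + 1) + 1) * (Px^2 * Bx m))"
      by (simp add: Bx_def B_seq_def iQ_def Yx_def Px_def nn_def assms(8)[symmetric] algebra_simps)
    show ?thesis unfolding D_def power_Suc
      by (rule alg_rec[OF hN hS hQ ez eu eA2 eB2])
  qed
  have Trec: "(of_nat m + 2 - iN) * T (Suc (Suc m)) = (2 * of_nat m + 3) * (z + u) * T (Suc m)
      - (of_nat m + 1 + iN) * (z - u)^2 * T m" for m
  proof -
    have X1: "(of_nat m + 2 - iN) * Xnr_star n (Suc (Suc m)) z u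
      = (2 * of_nat m + 3) * (z + u) * Xnr_star n (Suc m) z u
        - (of_nat m + 1 + iN) * (z - u)^2 * Xnr_star n m z u"
      using Xs_rec[OF n2 u0] unfolding iNn .
    have X2: "(of_nat m + 2 - iN) * Xnr_star n (Suc (Suc m)) u z
      = (2 * of_nat m + 3) * (u + z) * Xnr_star n (Suc m) u z
        - (of_nat m + 1 + iN) * (u - z)^2 * Xnr_star n m u z"
      using Xs_rec[OF n2 z0] unfolding iNn .
    show ?thesis unfolding T_def using X1 X2 by algebra
  qed
  have DT: "D m = T m \<and> D (Suc m) = T (Suc m)" for m
  proof (induction m)
    case 0 then show ?case using D0 D1 by simp
  next
    case (Suc m)
    have "(of_nat m + 2 - iN) * D (Suc (Suc m)) = (of_nat m + 2 - iN) * T (Suc (Suc m))"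
      unfolding Drec Trec using Suc.IH by simp
    then have "D (Suc (Suc m)) = T (Suc (Suc m))"
      using cm_nz[of m] mult_left_cancel unfolding alN by blast
    then show ?case using Suc.IH by simp
  qed
  have Rc: "Rnr n r w = w powr (1 / of_nat n) * Xnr_star n r 1 w - Xnr_star n r w 1"
    using Rclosed[OF wR] unfolding al_def .
  have X1: "u ^ r * Xnr_star n r 1 w = Xnr_star n r u z"
  proof -
    have "Xnr_star n r u z = z ^ r * (\<Sum>k\<le>r. cf (1 / of_nat n) r k * (u / z) ^ k)"
      by (rule Xs_dehom[OF z0])
    moreover have "Xnr_star n r 1 w = w ^ r * (\<Sum>k\<le>r. cf (1 / of_nat n) r k * (1 / w) ^ k)"
      by (rule Xs_dehom[OF w0])
    moreover have "u / z = 1 / w" using u0 w0 zwu by simp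
    ultimately show ?thesis using zwu by (simp add: power_mult_distrib)
  qed
  have X2: "u ^ r * Xnr_star n r w 1 = Xnr_star n r z u"
  proof -
    have "Xnr_star n r z u = u ^ r * (\<Sum>k\<le>r. cf (1 / of_nat n) r k * (z / u) ^ k)"
      by (rule Xs_dehom[OF u0])
    moreover have "Xnr_star n r w 1 = 1 ^ r * (\<Sum>k\<le>r. cf (1 / of_nat n) r k * (w / 1) ^ k)"
      by (rule Xs_dehom) simp
    moreover have "z / u = w" using u0 zwu by simp
    ultimately show ?thesis by simp
  qed
  have "s ^ r * (\<beta> * poly (A_seq n U P r) x - poly (B_seq n U P r) x) = T r"
    using DT[of r] by (simp add: D_def Ax_def Bx_def)
  also have "T r = (\<beta> * (a * w powr (1 / of_nat n) - b) - (c * w powr (1 / of_nat n) - d)) * Xnr_star n r u z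
           - (\<beta> * a - c) * (w powr (1 / of_nat n) * (u ^ r * Xnr_star n r 1 w) - u ^ r * Xnr_star n r w 1)"
    unfolding T_def X1 X2 by algebra
  also have "\<dots> = (\<beta> * (a * w powr (1 / of_nat n) - b) - (c * w powr (1 / of_nat n) - d)) * Xnr_star n r u z
           - (\<beta> * a - c) * u ^ r * Rnr n r w"
    unfolding Rc by (simp add: algebra_simps)
  finally show ?thesis .
qed

end
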